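(* Let $(X,\rho,\mu)$ be a space of homogeneous type. Then $X$ has infinitely many points if and only if for every $N>0$ there exist balls $B_0$ and $B_1$ in $X$ such that $\mu(B_1)>N\mu(B_0)$.
   Context: A space of homogeneous type $(X,\rho,\mu)$: $\rho$ is a quasi-metric on $X$, i.e. it satisfies the axioms of a metric except that the triangle inequality is replaced by $\rho(x,y)\le A_0(\rho(x,z)+\rho(z,y))$ for some constant $A_0\ge 1$; balls are $B(x,r)=\{y\in X:\rho(x,y)<r\}$; $\mu$ is a positive Borel measure defined on a $\sigma$-algebra containing the balls, with the doubling property: there is $C\ge1$ such that $0<\mu(B(x,2r))\le C\mu(B(x,r))<\infty$ for all $x\in X$, $r>0$. The smallest such $C$ is the doubling constant $C_\mu$. *)

theory Defs
  imports "HOL-Probability.Probability"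
begin

definition quasi_metric :: "'a set \<Rightarrow> ('a \<Rightarrow> 'a \<Rightarrow> real) \<Rightarrow> bool" where
  "quasi_metric X \<rho> \<longleftrightarrow>
     (\<forall>x\<in>X. \<forall>y\<in>X. \<rho> x y \<ge> 0) \<and>
     (\<forall>x\<in>X. \<forall>y\<in>X. \<rho> x y = 0 \<longleftrightarrow> x = y) \<and>
     (\<forall>x\<in>X. \<forall>y\<in>X. \<rho> x y = \<rho> y x) \<and>
     (\<exists>A0\<ge>1. \<forall>x\<in>X. \<forall>y\<in>X. \<forall>z\<in>X. \<rho> x y \<le> A0 * (\<rho> x z + \<rho> z y))"

definition qball :: "'a set \<Rightarrow> ('a \<Rightarrow> 'a \<Rightarrow> real) \<Rightarrow> 'a \<Rightarrow> real \<Rightarrow> 'a set" where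
  "qball X \<rho> x r = {y\<in>X. \<rho> x y < r}"

definition homogeneous_type :: "'a set \<Rightarrow> ('a \<Rightarrow> 'a \<Rightarrow> real) \<Rightarrow> 'a measure \<Rightarrow> bool" where
  "homogeneous_type X \<rho> \<mu> \<longleftrightarrow>
     quasi_metric X \<rho> \<and> space \<mu> = X \<and>
     (\<forall>x\<in>X. \<forall>r>0. qball X \<rho> x r \<in> sets \<mu>) \<and>
     (\<exists>C\<ge>1. \<forall>x\<in>X. \<forall>r>0.
        0 < emeasure \<mu> (qball X \<rho> x (2 * r)) \<and>
        emeasure \<mu> (qball X \<rho> x (2 * r)) \<le> ennreal C * emeasure \<mu> (qball X \<rho> x r) \<and>
        emeasure \<mu> (qball X \<rho> x r) < \<infinity>)"

end

theory Submission
  imports Defs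
begin

lemma ht_ball_facts:
  assumes "homogeneous_type X \<rho> \<mu>" "x \<in> X" "r > 0"
  shows "qball X \<rho> x r \<in> sets \<mu>" "qball X \<rho> x r \<in> fmeasurable \<mu>"
        "measure \<mu> (qball X \<rho> x r) > 0"
proof -
  have C: "\<forall>x\<in>X. \<forall>r>0.
        0 < emeasure \<mu> (qball X \<rho> x (2 * r)) \<and>
        emeasure \<mu> (qball X \<rho> x r) < \<infinity>"
    using assms(1) unfolding homogeneous_type_def by blast
  show s: "qball X \<rho> x r \<in> sets \<mu>" using assms unfolding homogeneous_type_def by blast
  have fin: "emeasure \<mu> (qball X \<rho> x r) < \<infinity>" using C assms by blast
  have "r/2 > 0" using assms by simp
  then have "0 < emeasure \<mu> (qball X \<rho> x (2 * (r/2)))" using C assms(2) by blast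
  then have pos: "0 < emeasure \<mu> (qball X \<rho> x r)" by simp
  show "qball X \<rho> x r \<in> fmeasurable \<mu>" using s fin by (rule fmeasurableI)
  show "measure \<mu> (qball X \<rho> x r) > 0"
    using fin pos unfolding measure_def
    by (simp add: enn2real_positive_iff)
qed

theorem lemma2p3:
  fixes X :: "'a set" and \<rho> :: "'a \<Rightarrow> 'a \<Rightarrow> real" and \<mu> :: "'a measure"
  assumes "homogeneous_type X \<rho> \<mu>"
  shows "infinite X \<longleftrightarrow>
    (\<forall>N>0. \<exists>x0\<in>X. \<exists>r0>0. \<exists>x1\<in>X. \<exists>r1>0.
        measure \<mu> (qball X \<rho> x1 r1) > N * measure \<mu> (qball X \<rho> x0 r0))"
proof
  have qm: "quasi_metric X \<rho>" using assms unfolding homogeneous_type_def by (elim conjE)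
  note qmu = qm[unfolded quasi_metric_def]
  have nn0: "\<forall>x\<in>X. \<forall>y\<in>X. \<rho> x y \<ge> 0" using conjunct1[OF qmu] .
  have z0: "\<forall>x\<in>X. \<forall>y\<in>X. \<rho> x y = 0 \<longleftrightarrow> x = y" using conjunct1[OF conjunct2[OF qmu]] .
  have sy0: "\<forall>x\<in>X. \<forall>y\<in>X. \<rho> x y = \<rho> y x" using conjunct1[OF conjunct2[OF conjunct2[OF qmu]]] .
  have A00: "\<exists>A0\<ge>1. \<forall>x\<in>X. \<forall>y\<in>X. \<forall>z\<in>X. \<rho> x y \<le> A0 * (\<rho> x z + \<rho> z y)"
    using conjunct2[OF conjunct2[OF conjunct2[OF qmu]]] .
  have nn: "\<And>x y. x \<in> X \<Longrightarrow> y \<in> X \<Longrightarrow> \<rho> x y \<ge> 0" using nn0 by simp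
  have z: "\<And>x y. x \<in> X \<Longrightarrow> y \<in> X \<Longrightarrow> \<rho> x y = 0 \<longleftrightarrow> x = y" using z0 by simp
  have sy: "\<And>x y. x \<in> X \<Longrightarrow> y \<in> X \<Longrightarrow> \<rho> x y = \<rho> y x" using sy0 by simp
  from A00 obtain A0 where A0: "A0 \<ge> 1"
    "\<And>x y z. x\<in>X \<Longrightarrow> y\<in>X \<Longrightarrow> z\<in>X \<Longrightarrow> \<rho> x y \<le> A0 * (\<rho> x z + \<rho> z y)"
    by auto
  assume inf: "infinite X"
  show "\<forall>N>0. \<exists>x0\<in>X. \<exists>r0>0. \<exists>x1\<in>X. \<exists>r1>0.
        measure \<mu> (qball X \<rho> x1 r1) > N * measure \<mu> (qball X \<rho> x0 r0)"
  proof (intro allI impI)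
    fix N :: real assume N: "N > 0"
    define M where "M = nat \<lceil>N\<rceil> + 1"
    have MN: "real M > N" unfolding M_def by linarith
    have M2: "M \<ge> 2" unfolding M_def using N by linarith
    obtain S where S: "finite S" "card S = M" "S \<subseteq> X"
      using infinite_arbitrarily_large[OF inf] by blast
    define P where "P = {(s,t). s \<in> S \<and> t \<in> S \<and> s \<noteq> t}"
    have Pfin: "finite P" unfolding P_def
      by (rule finite_subset[of _ "S \<times> S"]) (use S in auto)
    obtain s0 where s0: "s0 \<in> S" using S M2 by fastforce
    obtain t0 where t0: "t0 \<in> S" "t0 \<noteq> s0"
    proof -
      have "card (S - {s0}) \<ge> 1" using S M2 s0 by simp
      then have "S - {s0} \<noteq> {}" by (metis card.empty not_one_le_zero)
      then show ?thesis using that by blast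
    qed
    have Pne: "P \<noteq> {}" unfolding P_def using s0 t0 by blast
    define \<delta> where "\<delta> = Min ((\<lambda>(s,t). \<rho> s t) ` P)"
    have \<delta>pos: "\<delta> > 0" unfolding \<delta>_def
    proof (subst Min_gr_iff)
      show "\<forall>a\<in>(\<lambda>(s,t). \<rho> s t) ` P. 0 < a"
      proof
        fix a assume "a \<in> (\<lambda>(s,t). \<rho> s t) ` P"
        then obtain s t where "s \<in> S" "t \<in> S" "s \<noteq> t" "a = \<rho> s t" unfolding P_def by auto
        then have "s \<in> X" "t \<in> X" "s \<noteq> t" "a = \<rho> s t" using S(3) by auto
        then show "0 < a" using nn[of s t] z[of s t] by linarith
      qed
    qed (use Pfin Pne in auto)
    have \<delta>le: "\<And>s t. s \<in> S \<Longrightarrow> t \<in> S \<Longrightarrow> s \<noteq> t \<Longrightarrow> \<delta> \<le> \<rho> s t"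
      unfolding \<delta>_def using Pfin unfolding P_def
      by (intro Min_le) (auto simp: P_def)
    define r where "r = \<delta> / (2 * A0)"
    have rpos: "r > 0" unfolding r_def using \<delta>pos A0 by simp
    have disj: "disjoint_family_on (\<lambda>s. qball X \<rho> s r) S"
      unfolding disjoint_family_on_def
    proof (intro ballI impI)
      fix s t assume st: "s \<in> S" "t \<in> S" "s \<noteq> t"
      show "qball X \<rho> s r \<inter> qball X \<rho> t r = {}"
      proof (rule ccontr)
        assume "qball X \<rho> s r \<inter> qball X \<rho> t r \<noteq> {}"
        then obtain y where y: "y \<in> X" "\<rho> s y < r" "\<rho> t y < r" unfolding qball_def by blast
        have sX: "s \<in> X" "t \<in> X" using st S by auto
        have "\<rho> s t \<le> A0 * (\<rho> s y + \<rho> y t)" using A0(2) sX y by blast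
        also have "\<dots> = A0 * (\<rho> s y + \<rho> t y)" using sy sX y by simp
        also have "\<dots> < A0 * (2 * r)" using y A0 by (intro mult_strict_left_mono) auto
        also have "\<dots> = \<delta>" unfolding r_def using A0 by simp
        finally show False using \<delta>le[OF st] by simp
      qed
    qed
    define D where "D = Max ((\<rho> s0) ` S)"
    have Dle: "\<And>s. s \<in> S \<Longrightarrow> \<rho> s0 s \<le> D" unfolding D_def using S by auto
    define R where "R = A0 * (\<bar>D\<bar> + r) + 1"
    have "A0 * (\<bar>D\<bar> + r) \<ge> 0" using A0(1) rpos by (intro mult_nonneg_nonneg) auto
    then have Rpos: "R > 0" unfolding R_def by linarith
    have s0X: "s0 \<in> X" using s0 S by auto
    have sub: "(\<Union>s\<in>S. qball X \<rho> s r) \<subseteq> qball X \<rho> s0 R"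
    proof
      fix y assume "y \<in> (\<Union>s\<in>S. qball X \<rho> s r)"
      then obtain s where s: "s \<in> S" "y \<in> X" "\<rho> s y < r" unfolding qball_def by blast
      have sX: "s \<in> X" using s S by auto
      have "\<rho> s0 y \<le> A0 * (\<rho> s0 s + \<rho> s y)" using A0(2) s0X sX s by blast
      also have "\<dots> \<le> A0 * (\<bar>D\<bar> + r)" using Dle[OF s(1)] s A0
        by (intro mult_left_mono) auto
      also have "\<dots> < R" unfolding R_def by simp
      finally show "y \<in> qball X \<rho> s0 R" unfolding qball_def using s by simp
    qed
    define m where "m = Min ((\<lambda>s. measure \<mu> (qball X \<rho> s r)) ` S)"
    obtain s1 where s1: "s1 \<in> S" "m = measure \<mu> (qball X \<rho> s1 r)"
    proof -
      have "m \<in> (\<lambda>s. measure \<mu> (qball X \<rho> s r)) ` S"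
        unfolding m_def using S s0 by (intro Min_in) auto
      then show ?thesis using that by blast
    qed
    have mle: "\<And>s. s \<in> S \<Longrightarrow> m \<le> measure \<mu> (qball X \<rho> s r)"
      unfolding m_def using S by auto
    have mpos: "m > 0" using s1 S ht_ball_facts[OF assms _ rpos] by auto
    have "real M * m = (\<Sum>s\<in>S. m)" using S by simp
    also have "\<dots> \<le> (\<Sum>s\<in>S. measure \<mu> (qball X \<rho> s r))" by (rule sum_mono) (rule mle)
    also have "\<dots> = measure \<mu> (\<Union>s\<in>S. qball X \<rho> s r)"
      using S disj ht_ball_facts[OF assms _ rpos]
      by (intro measure_finite_Union[symmetric]) (auto simp: fmeasurable_def, fastforce)
    also have "\<dots> \<le> measure \<mu> (qball X \<rho> s0 R)"
      using sub S ht_ball_facts[OF assms _ rpos] ht_ball_facts[OF assms s0X Rpos]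
      by (intro measure_mono_fmeasurable) (auto intro!: sets.finite_UN)
    finally have "real M * m \<le> measure \<mu> (qball X \<rho> s0 R)" .
    moreover have "N * m < real M * m" using MN mpos by simp
    ultimately show "\<exists>x0\<in>X. \<exists>r0>0. \<exists>x1\<in>X. \<exists>r1>0.
        measure \<mu> (qball X \<rho> x1 r1) > N * measure \<mu> (qball X \<rho> x0 r0)"
      using s1 S s0X rpos Rpos by (intro bexI[of _ s1] exI[of _ r] conjI bexI[of _ s0] exI[of _ R]) auto
  qed
next
  assume H: "\<forall>N>0. \<exists>x0\<in>X. \<exists>r0>0. \<exists>x1\<in>X. \<exists>r1>0.
        measure \<mu> (qball X \<rho> x1 r1) > N * measure \<mu> (qball X \<rho> x0 r0)"
  show "infinite X"
  proof
    assume fin: "finite X"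
    define B where "B = {qball X \<rho> x r | x r. x \<in> X \<and> r > 0}"
    have Bfin: "finite B"
      by (rule finite_subset[of _ "Pow X"]) (use fin in \<open>auto simp: B_def qball_def\<close>)
    define Ms where "Ms = measure \<mu> ` B"
    have Msfin: "finite Ms" unfolding Ms_def using Bfin by simp
    have "(1::real) > 0" by simp
    from H[rule_format, OF this] obtain x0 and r0 :: real where x0: "x0 \<in> X" "r0 > 0"
      by (elim bexE exE conjE) blast
    have Bne: "Ms \<noteq> {}" unfolding Ms_def B_def using x0 by blast
    have Mspos: "\<And>a. a \<in> Ms \<Longrightarrow> a > 0"
      unfolding Ms_def B_def using ht_ball_facts[OF assms] by auto
    define N where "N = Max Ms / Min Ms"
    have minpos: "Min Ms > 0" using Min_in[OF Msfin Bne] Mspos by blast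
    have maxpos: "Max Ms > 0" using Max_in[OF Msfin Bne] Mspos by blast
    have "N > 0" unfolding N_def using minpos maxpos by simp
    from H[rule_format, OF this] obtain y0 y1 and s0 s1 :: real where y: "y0 \<in> X" "s0 > 0" "y1 \<in> X" "s1 > 0"
      "measure \<mu> (qball X \<rho> y1 s1) > N * measure \<mu> (qball X \<rho> y0 s0)"
      by (elim bexE exE conjE) blast
    have in0: "measure \<mu> (qball X \<rho> y0 s0) \<in> Ms" unfolding Ms_def B_def using y by blast
    have in1: "measure \<mu> (qball X \<rho> y1 s1) \<in> Ms" unfolding Ms_def B_def using y by blast
    have "measure \<mu> (qball X \<rho> y1 s1) \<le> Max Ms" using Msfin in1 by simp
    also have "\<dots> = N * Min Ms" unfolding N_def using minpos by simp
    also have "\<dots> \<le> N * measure \<mu> (qball X \<rho> y0 s0)"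
      using Msfin in0 \<open>N > 0\<close> by (intro mult_left_mono) auto
    finally show False using y(5) by simp
  qed
qed

end
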